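(* Let $\mathbb{R}^n_s$ be $\mathbb{R}^n$ with a non-degenerate symmetric bilinear form of signature $(n-s,s)$, let $G\subset\mathrm{Iso}(\mathbb{R}^n_s)$ be a real Zariski-closed subgroup whose centralizer $L=\mathrm{Z}_{\mathrm{Iso}(\mathbb{R}^n_s)}(G)$ acts transitively on $\mathbb{R}^n$, and let $U$ be the unipotent radical of $L$; assume $U$ acts transitively on $\mathbb{R}^n$. For $p\in\mathbb{R}^n$ let $F_p=G.p$, let $U_p$ be the stabilizer of $p$ in $U$, and let $U_{F_p}=\{u\in U\mid u.F_p\subseteq F_p\}$. Then $U_{F_p}$ is an algebraic subgroup of $U$ acting transitively on $F_p$, and $U_p$ is a normal subgroup of $U_{F_p}$. *)

theory Defs
  imports "HOL-Analysis.Analysis" "HOL-Algebra.Coset"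
begin

text \<open>An element of Iso(R^n_s) is an affine map x \<mapsto> A x + b, represented by the pair (A, b).
  The non-degenerate symmetric bilinear form is (x,y) \<mapsto> x \<bullet> (J *v y) for a symmetric
  invertible matrix J.\<close>

type_synonym ('n) aff = "(real^'n^'n) \<times> (real^'n)"

definition nondeg_sym_form :: "real^('n::finite)^'n \<Rightarrow> bool" where
  "nondeg_sym_form J \<longleftrightarrow> transpose J = J \<and> invertible J"

definition aff_act :: "('n::finite) aff \<Rightarrow> real^'n \<Rightarrow> real^'n" where
  "aff_act g x = fst g *v x + snd g"

definition iso_group :: "real^('n::finite)^'n \<Rightarrow> 'n aff monoid" where
  "iso_group J = \<lparr> carrier = {(A, b). transpose A ** J ** A = J},
                   mult = (\<lambda>(A, b) (C, d). (A ** C, A *v d + b)),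
                   one = (mat 1, 0) \<rparr>"

inductive_set poly_fun :: "(('n::finite) aff \<Rightarrow> real) set" where
  const: "(\<lambda>_. c) \<in> poly_fun"
| coordA: "(\<lambda>g. fst g $ i $ j) \<in> poly_fun"
| coordb: "(\<lambda>g. snd g $ i) \<in> poly_fun"
| add: "f \<in> poly_fun \<Longrightarrow> h \<in> poly_fun \<Longrightarrow> (\<lambda>g. f g + h g) \<in> poly_fun"
| mult: "f \<in> poly_fun \<Longrightarrow> h \<in> poly_fun \<Longrightarrow> (\<lambda>g. f g * h g) \<in> poly_fun"

definition zariski_closed_in :: "('n::finite) aff set \<Rightarrow> 'n aff set \<Rightarrow> bool" where
  "zariski_closed_in X S \<longleftrightarrow> (\<exists>P \<subseteq> poly_fun. S = {g \<in> X. \<forall>f \<in> P. f g = 0})"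

definition algebraic_subgroup :: "real^('n::finite)^'n \<Rightarrow> 'n aff set \<Rightarrow> bool" where
  "algebraic_subgroup J H \<longleftrightarrow> subgroup H (iso_group J) \<and> zariski_closed_in (carrier (iso_group J)) H"

definition centralizer_in :: "real^('n::finite)^'n \<Rightarrow> 'n aff set \<Rightarrow> 'n aff set" where
  "centralizer_in J G = {l \<in> carrier (iso_group J). \<forall>g \<in> G.
      l \<otimes>\<^bsub>iso_group J\<^esub> g = g \<otimes>\<^bsub>iso_group J\<^esub> l}"

text \<open>(A,b) is unipotent iff its (n+1)x(n+1) affine matrix is unipotent, iff A - 1 is nilpotent.\<close>
definition unipotent :: "('n::finite) aff \<Rightarrow> bool" where
  "unipotent g \<longleftrightarrow> (\<exists>k. ((\<lambda>M. (fst g - mat 1) ** M) ^^ k) (mat 1) = 0)"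

text \<open>Unipotent radical of an algebraic group L: the largest normal unipotent algebraic subgroup
  (unipotent algebraic groups are connected in characteristic 0).\<close>
definition is_unipotent_radical :: "real^('n::finite)^'n \<Rightarrow> 'n aff set \<Rightarrow> 'n aff set \<Rightarrow> bool" where
  "is_unipotent_radical J L U \<longleftrightarrow>
     algebraic_subgroup J U \<and> U \<subseteq> L \<and> normal U ((iso_group J)\<lparr>carrier := L\<rparr>) \<and> (\<forall>u \<in> U. unipotent u) \<and>
     (\<forall>V. algebraic_subgroup J V \<and> V \<subseteq> L \<and> normal V ((iso_group J)\<lparr>carrier := L\<rparr>) \<and> (\<forall>v \<in> V. unipotent v)
          \<longrightarrow> V \<subseteq> U)"

definition acts_transitively_on :: "('n::finite) aff set \<Rightarrow> (real^'n) set \<Rightarrow> bool" where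
  "acts_transitively_on H X \<longleftrightarrow> (\<forall>x \<in> X. \<forall>y \<in> X. \<exists>h \<in> H. aff_act h x = y)"

end

theory Submission imports Defs begin

lemma iso_mult: "x \<otimes>\<^bsub>iso_group J\<^esub> y = (fst x ** fst y, fst x *v snd y + snd x)"
  by (cases x, cases y) (simp add: iso_group_def)
lemma iso_one: "\<one>\<^bsub>iso_group J\<^esub> = (mat 1, 0)"
  by (simp add: iso_group_def)
lemma iso_carrier: "x \<in> carrier (iso_group J) \<longleftrightarrow> transpose (fst x) ** J ** fst x = J"
  by (cases x) (simp add: iso_group_def)

lemma aff_act_mult: "aff_act (x \<otimes>\<^bsub>iso_group J\<^esub> y) v = aff_act x (aff_act y v)"
  by (simp add: aff_act_def iso_mult matrix_vector_mul_assoc[symmetric] matrix_vector_right_distrib algebra_simps)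
lemma aff_act_one: "aff_act \<one>\<^bsub>iso_group J\<^esub> v = v"
  by (simp add: aff_act_def iso_one)


lemma poly_neg: "f \<in> poly_fun \<Longrightarrow> (\<lambda>g. - f g) \<in> poly_fun"
  using poly_fun.mult[OF poly_fun.const[of "-1"], of f] by simp

lemma poly_diff: "f \<in> poly_fun \<Longrightarrow> h \<in> poly_fun \<Longrightarrow> (\<lambda>g. f g - h g) \<in> poly_fun"
  using poly_fun.add[of f "\<lambda>g. - h g"] poly_neg[of h] by simp

lemma poly_sum:
  fixes F :: "'n::finite aff \<Rightarrow> 'k \<Rightarrow> real"
  shows "finite S \<Longrightarrow> (\<And>k. k \<in> S \<Longrightarrow> (\<lambda>g. F g k) \<in> poly_fun) \<Longrightarrow> (\<lambda>g. \<Sum>k\<in>S. F g k) \<in> poly_fun"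
proof (induction S rule: finite_induct)
  case empty then show ?case using poly_fun.const[of 0] by simp
next
  case (insert x S)
  then have "(\<lambda>g. F g x + (\<Sum>k\<in>S. F g k)) \<in> poly_fun" by (intro poly_fun.add) auto
  then show ?case using insert by simp
qed

lemma poly_comp:
  fixes h :: "'m::finite aff \<Rightarrow> 'n::finite aff"
  assumes "f \<in> poly_fun"
    and hA: "\<And>i j. (\<lambda>g. fst (h g) $ i $ j) \<in> poly_fun" and hb: "\<And>i. (\<lambda>g. snd (h g) $ i) \<in> poly_fun"
  shows "(\<lambda>g. f (h g)) \<in> poly_fun"
  using assms(1)
proof induction
  case (const c) then show ?case by (rule poly_fun.const)
next
  case (coordA i j) then show ?case by (rule hA)
next
  case (coordb i) then show ?case by (rule hb)
next
  case (add f1 f2) then show ?case by (auto intro: poly_fun.add)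
next
  case (mult f1 f2) then show ?case by (auto intro: poly_fun.mult)
qed

lemma poly_act:
  fixes p :: "real^'n::finite"
  shows "(\<lambda>g. aff_act g p $ i) \<in> poly_fun"
proof -
  have e: "aff_act g p $ i = (\<Sum>j\<in>(UNIV::'n set). fst g $ i $ j * p $ j) + snd g $ i" for g
    by (simp add: aff_act_def matrix_vector_mult_def)
  show ?thesis unfolding e
    by (intro poly_fun.add poly_sum poly_fun.mult poly_fun.coordA poly_fun.coordb poly_fun.const) simp_all
qed

lemma poly_lin:
  fixes \<phi> :: "real^'m::finite \<Rightarrow> real" and w :: "'n::finite aff \<Rightarrow> real^'m"
  assumes "linear \<phi>" "\<And>k. (\<lambda>g. w g $ k) \<in> poly_fun"
  shows "(\<lambda>g. \<phi> (w g)) \<in> poly_fun"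
proof -
  have e: "\<phi> x = (\<Sum>k\<in>UNIV. x$k * \<phi> (axis k 1))" for x
  proof -
    have "\<phi> x = \<phi> (\<Sum>k\<in>UNIV. x$k *\<^sub>R axis k 1)" using basis_expansion[of x] by (simp add: scalar_mult_eq_scaleR)
    also have "\<dots> = (\<Sum>k\<in>UNIV. x$k * \<phi> (axis k 1))"
      by (simp add: linear_sum[OF assms(1)] linear_scale[OF assms(1)])
    finally show ?thesis .
  qed
  have e2: "(\<lambda>g. \<phi> (w g)) = (\<lambda>g. \<Sum>k\<in>UNIV. w g $ k * \<phi> (axis k 1))"
    by (rule ext) (rule e)
  show ?thesis unfolding e2
    by (intro poly_sum poly_fun.mult assms(2) poly_fun.const) simp_all
qed

lemma carrier_poly:
  fixes J :: "real^'n::finite^'n"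
  shows "\<exists>P \<subseteq> poly_fun. carrier (iso_group J) = {g. \<forall>f\<in>P. f g = 0}"
proof -
  define P :: "('n aff \<Rightarrow> real) set" where "P = {(\<lambda>g. (transpose (fst g) ** J ** fst g) $ i $ j - J $ i $ j) | i j. True}"
  have e: "(transpose A ** J ** A) $ i $ j = (\<Sum>k\<in>UNIV. (\<Sum>l\<in>UNIV. A $ l $ i * J $ l $ k) * A $ k $ j)" for A i j
    by (simp add: matrix_matrix_mult_def transpose_def)
  have "P \<subseteq> poly_fun"
  proof
    fix f assume "f \<in> P"
    then obtain i j where f: "f = (\<lambda>g. (transpose (fst g) ** J ** fst g) $ i $ j - J $ i $ j)" unfolding P_def by blast
    show "f \<in> poly_fun" unfolding f e
      by (intro poly_diff poly_sum poly_fun.mult poly_fun.coordA poly_fun.const) simp_all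
  qed
  moreover have "carrier (iso_group J) = {g. \<forall>f\<in>P. f g = 0}"
  proof (rule Set.set_eqI)
    fix g :: "'n aff"
    have "g \<in> carrier (iso_group J) \<longleftrightarrow> (\<forall>i j. (transpose (fst g) ** J ** fst g) $ i $ j - J $ i $ j = 0)"
      by (simp add: iso_carrier vec_eq_iff)
    also have "\<dots> \<longleftrightarrow> (\<forall>f\<in>P. f g = 0)" unfolding P_def by force
    finally show "g \<in> carrier (iso_group J) \<longleftrightarrow> g \<in> {g. \<forall>f\<in>P. f g = 0}" by simp
  qed
  ultimately show ?thesis by blast
qed

lemma mm_add_r: "((A::real^'n::finite^'m::finite) + B) ** (C::real^'k::finite^'n) = A ** C + B ** C"
  by (vector matrix_matrix_mult_def sum.distrib distrib_right)
lemma mm_diff_r: "((A::real^'n::finite^'m::finite) - B) ** (C::real^'k::finite^'n) = A ** C - B ** C"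
  by (vector matrix_matrix_mult_def sum_subtractf left_diff_distrib)
lemma mm_diff_l: "(C::real^'m::finite^'k::finite) ** ((A::real^'n::finite^'m) - B) = C ** A - C ** B"
  by (vector matrix_matrix_mult_def sum_subtractf right_diff_distrib)
lemma mm_scale_l: "(c *\<^sub>R (A::real^'n::finite^'m::finite)) ** (C::real^'k::finite^'n) = c *\<^sub>R (A ** C)"
  by (vector matrix_matrix_mult_def sum_distrib_left mult.assoc)
lemma mm_scale_r: "(C::real^'m::finite^'k::finite) ** (c *\<^sub>R (A::real^'n::finite^'m)) = c *\<^sub>R (C ** A)"
  by (vector matrix_matrix_mult_def sum_distrib_left mult.left_commute)


lemma zar:
  fixes J :: "real^'n::finite^'n" and p :: "real^'n"
  assumes grp: "group (iso_group J)"
    and sG: "subgroup G (iso_group J)" and zG: "zariski_closed_in (carrier (iso_group J)) G"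
    and zU: "zariski_closed_in (carrier (iso_group J)) U"
    and sU: "subgroup U (iso_group J)"
    and comm: "\<And>u g. u \<in> U \<Longrightarrow> g \<in> G \<Longrightarrow> u \<otimes>\<^bsub>iso_group J\<^esub> g = g \<otimes>\<^bsub>iso_group J\<^esub> u"
    and tr: "acts_transitively_on U UNIV"
  shows "zariski_closed_in (carrier (iso_group J)) {u \<in> U. \<exists>g\<in>G. aff_act g p = aff_act u p}"
proof -
  let ?X = "carrier (iso_group J)"
  obtain PG where PG: "PG \<subseteq> poly_fun" "G = {g\<in>?X. \<forall>f\<in>PG. f g = 0}"
    using zG unfolding zariski_closed_in_def by blast
  obtain PU where PU: "PU \<subseteq> poly_fun" "U = {g\<in>?X. \<forall>f\<in>PU. f g = 0}"
    using zU unfolding zariski_closed_in_def by blast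
  obtain PX where PX: "PX \<subseteq> poly_fun" "?X = {g. \<forall>f\<in>PX. f g = 0}"
    using carrier_poly[of J] by blast
  define D :: "'n aff set" where "D = {d. \<forall>u\<in>U. fst d ** fst u = fst u ** fst d \<and> fst d *v snd u + snd d = fst u *v snd d}"
  define ev :: "'n aff \<Rightarrow> real^'n" where "ev = (\<lambda>d. fst d *v p + snd d)"
  have lin_ev: "linear ev"
  proof (rule linearI)
    fix x y :: "'n aff"
    show "ev (x + y) = ev x + ev y" unfolding ev_def by (simp add: matrix_vector_mult_add_rdistrib algebra_simps)
  next
    fix c :: real and x :: "'n aff"
    show "ev (c *\<^sub>R x) = c *\<^sub>R ev x" unfolding ev_def
      by (simp add: scaleR_matrix_vector_assoc[symmetric] scaleR_right_distrib)
  qed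
  have sD: "subspace D"
    unfolding subspace_def
  proof (intro conjI ballI allI)
    show "0 \<in> D" unfolding D_def by simp
  next
    fix x y assume x: "x \<in> D" and y: "y \<in> D"
    show "x + y \<in> D" unfolding D_def
    proof (intro CollectI ballI conjI)
      fix u assume u: "u \<in> U"
      have x1: "fst x ** fst u = fst u ** fst x" and x2: "fst x *v snd u + snd x = fst u *v snd x"
        using x u unfolding D_def by auto
      have y1: "fst y ** fst u = fst u ** fst y" and y2: "fst y *v snd u + snd y = fst u *v snd y"
        using y u unfolding D_def by auto
      show "fst (x + y) ** fst u = fst u ** fst (x + y)"
        by (simp add: mm_add_r matrix_add_ldistrib x1 y1)
      have "fst (x + y) *v snd u + snd (x + y) = (fst x *v snd u + snd x) + (fst y *v snd u + snd y)"
        by (simp add: matrix_vector_mult_add_rdistrib algebra_simps)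
      also have "\<dots> = fst u *v snd (x + y)" by (simp add: x2 y2 matrix_vector_right_distrib)
      finally show "fst (x + y) *v snd u + snd (x + y) = fst u *v snd (x + y)" .
    qed
  next
    fix c :: real and x assume x: "x \<in> D"
    show "c *\<^sub>R x \<in> D" unfolding D_def
    proof (intro CollectI ballI conjI)
      fix u assume u: "u \<in> U"
      have x1: "fst x ** fst u = fst u ** fst x" and x2: "fst x *v snd u + snd x = fst u *v snd x"
        using x u unfolding D_def by auto
      show "fst (c *\<^sub>R x) ** fst u = fst u ** fst (c *\<^sub>R x)"
        by (simp add: mm_scale_l mm_scale_r x1)
      have "fst (c *\<^sub>R x) *v snd u + snd (c *\<^sub>R x) = c *\<^sub>R (fst x *v snd u + snd x)"
        by (simp add: scaleR_matrix_vector_assoc[symmetric] scaleR_right_distrib)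
      also have "\<dots> = fst u *v snd (c *\<^sub>R x)" by (simp add: x2 matrix_vector_mult_scaleR)
      finally show "fst (c *\<^sub>R x) *v snd u + snd (c *\<^sub>R x) = fst u *v snd (c *\<^sub>R x)" .
    qed
  qed
  have key: "d = 0" if d: "d \<in> D" "ev d = 0" for d
  proof -
    have ex: "fst d *v x + snd d = 0" for x
    proof -
      obtain u where u: "u \<in> U" "aff_act u p = x" using tr unfolding acts_transitively_on_def by blast
      have d1: "fst d ** fst u = fst u ** fst d" and d2: "fst d *v snd u + snd d = fst u *v snd d"
        using d(1) u(1) unfolding D_def by auto
      have "fst d *v x + snd d = fst d *v (fst u *v p + snd u) + snd d"
        using u(2) unfolding aff_act_def by simp
      also have "\<dots> = (fst d ** fst u) *v p + (fst d *v snd u + snd d)"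
        by (simp add: matrix_vector_right_distrib matrix_vector_mul_assoc algebra_simps)
      also have "\<dots> = fst u *v (fst d *v p + snd d)"
        by (simp add: d1 d2 matrix_vector_right_distrib matrix_vector_mul_assoc)
      also have "\<dots> = 0" using d(2) unfolding ev_def by simp
      finally show ?thesis .
    qed
    have s0: "snd d = 0" using ex[of 0] by simp
    have "fst d = 0" using ex s0 by (simp add: matrix_eq)
    then show ?thesis using s0 by (simp add: prod_eq_iff)
  qed
  have inj: "inj_on ev D"
  proof (rule inj_onI)
    fix x y assume xy: "x \<in> D" "y \<in> D" "ev x = ev y"
    have "x - y \<in> D" using subspace_diff[OF sD xy(1,2)] .
    moreover have "ev (x - y) = 0" using linear_diff[OF lin_ev] xy(3) by simp
    ultimately have "x - y = 0" by (rule key)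
    then show "x = y" by simp
  qed
  obtain \<Psi> where \<Psi>: "linear \<Psi>" "\<forall>v\<in>D. \<Psi> (ev v) = v"
    using linear_exists_left_inverse_on[OF lin_ev sD inj] by blast
  define h :: "'n aff \<Rightarrow> 'n aff" where
    "h u = (mat 1 + fst (\<Psi> (aff_act u p - p)), snd (\<Psi> (aff_act u p - p)))" for u
  have hg: "h u = g" if u: "u \<in> U" and g: "g \<in> G" "aff_act g p = aff_act u p" for u g
  proof -
    define d :: "'n aff" where "d = (fst g - mat 1, snd g)"
    have "d \<in> D" unfolding D_def
    proof (intro CollectI ballI conjI)
      fix u' assume u': "u' \<in> U"
      have "u' \<otimes>\<^bsub>iso_group J\<^esub> g = g \<otimes>\<^bsub>iso_group J\<^esub> u'" using comm[OF u' g(1)] .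
      then have c1: "fst u' ** fst g = fst g ** fst u'" and c2: "fst u' *v snd g + snd u' = fst g *v snd u' + snd g"
        by (simp_all add: iso_mult)
      show "fst d ** fst u' = fst u' ** fst d" by (simp add: d_def mm_diff_r mm_diff_l c1)
      show "fst d *v snd u' + snd d = fst u' *v snd d"
        using c2 by (simp add: d_def matrix_vector_mult_diff_rdistrib algebra_simps)
    qed
    moreover have "ev d = aff_act u p - p" using g(2) unfolding ev_def d_def aff_act_def
      by (simp add: matrix_vector_mult_diff_rdistrib algebra_simps)
    ultimately have "\<Psi> (aff_act u p - p) = d" using \<Psi>(2) by metis
    then show ?thesis unfolding h_def d_def by (simp add: prod_eq_iff)
  qed
  have lin_c: "linear (\<lambda>w. fst (\<Psi> w) $ i $ j)" for i j
    by (rule linearI) (simp_all add: linear_add[OF \<Psi>(1)] linear_scale[OF \<Psi>(1)])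
  have lin_d: "linear (\<lambda>w. snd (\<Psi> w) $ i)" for i
    by (rule linearI) (simp_all add: linear_add[OF \<Psi>(1)] linear_scale[OF \<Psi>(1)])
  have pw: "(\<lambda>g. (aff_act g p - p) $ k) \<in> poly_fun" for k
    by (simp only: vector_minus_component) (intro poly_diff poly_act poly_fun.const)
  have hA: "(\<lambda>g. fst (h g) $ i $ j) \<in> poly_fun" for i j
  proof -
    have "(\<lambda>g. fst (\<Psi> (aff_act g p - p)) $ i $ j) \<in> poly_fun"
      using poly_lin[OF lin_c pw] .
    then have "(\<lambda>g. mat 1 $ i $ j + fst (\<Psi> (aff_act g p - p)) $ i $ j) \<in> poly_fun"
      by (intro poly_fun.add poly_fun.const)
    then show ?thesis unfolding h_def by simp
  qed
  have hb: "(\<lambda>g. snd (h g) $ i) \<in> poly_fun" for i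
    unfolding h_def using poly_lin[OF lin_d pw] by simp
  define P where "P = PU \<union> (\<lambda>f g. f (h g)) ` (PG \<union> PX) \<union> range (\<lambda>i g. aff_act (h g) p $ i - aff_act g p $ i)"
  have "P \<subseteq> poly_fun"
  proof
    fix f assume "f \<in> P"
    then consider (a) "f \<in> PU" | (b) f0 where "f0 \<in> PG \<union> PX" "f = (\<lambda>g. f0 (h g))"
      | (c) i where "f = (\<lambda>g. aff_act (h g) p $ i - aff_act g p $ i)"
      unfolding P_def by blast
    then show "f \<in> poly_fun"
    proof cases
      case a then show ?thesis using PU(1) by blast
    next
      case (b f0)
      then have "f0 \<in> poly_fun" using PG(1) PX(1) by blast
      then show ?thesis unfolding b(2) by (rule poly_comp[OF _ hA hb])
    next
      case (c i)
      show ?thesis unfolding c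
        by (intro poly_diff poly_act poly_comp[OF _ hA hb, of "\<lambda>g. aff_act g p $ i"])
    qed
  qed
  moreover have "{u \<in> U. \<exists>g\<in>G. aff_act g p = aff_act u p} = {g \<in> ?X. \<forall>f\<in>P. f g = 0}"
  proof (rule Set.set_eqI, rule iffI)
    fix u assume "u \<in> {u \<in> U. \<exists>g\<in>G. aff_act g p = aff_act u p}"
    then obtain g where u: "u \<in> U" and g: "g \<in> G" "aff_act g p = aff_act u p" by blast
    have hu: "h u = g" using hg[OF u g] .
    have uX: "u \<in> ?X" and uPU: "\<forall>f\<in>PU. f u = 0" using u PU(2) by blast+
    have gX: "g \<in> ?X" and gPG: "\<forall>f\<in>PG. f g = 0" using g(1) PG(2) by blast+
    have gPX: "\<forall>f\<in>PX. f g = 0" using gX PX(2) by blast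
    have "\<forall>f\<in>P. f u = 0" unfolding P_def using uPU gPG gPX g(2) hu by auto
    then show "u \<in> {g \<in> ?X. \<forall>f\<in>P. f g = 0}" using uX by blast
  next
    fix u assume "u \<in> {g \<in> ?X. \<forall>f\<in>P. f g = 0}"
    then have uX: "u \<in> ?X" and uP: "\<forall>f\<in>P. f u = 0" by blast+
    have "\<forall>f\<in>PU. f u = 0" using uP unfolding P_def by blast
    then have uU: "u \<in> U" using uX PU(2) by blast
    have "\<forall>f\<in>PX. f (h u) = 0"
    proof
      fix f assume "f \<in> PX"
      then have "(\<lambda>g. f (h g)) \<in> P" unfolding P_def by blast
      from uP[rule_format, OF this] show "f (h u) = 0" by simp
    qed
    then have hX: "h u \<in> ?X" using PX(2) by blast
    have "\<forall>f\<in>PG. f (h u) = 0"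
    proof
      fix f assume "f \<in> PG"
      then have "(\<lambda>g. f (h g)) \<in> P" unfolding P_def by blast
      from uP[rule_format, OF this] show "f (h u) = 0" by simp
    qed
    then have hG: "h u \<in> G" using hX PG(2) by blast
    have "aff_act (h u) p $ i - aff_act u p $ i = 0" for i
    proof -
      have "(\<lambda>g. aff_act (h g) p $ i - aff_act g p $ i) \<in> P" unfolding P_def by blast
      from uP[rule_format, OF this] show ?thesis by simp
    qed
    then have "aff_act (h u) p = aff_act u p" by (simp add: vec_eq_iff)
    then show "u \<in> {u \<in> U. \<exists>g\<in>G. aff_act g p = aff_act u p}" using uU hG by blast
  qed
  ultimately show ?thesis unfolding zariski_closed_in_def by blast
qed

lemma iso_group_is_group:
  assumes "nondeg_sym_form J"
  shows "group (iso_group J)"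
proof (rule groupI)
  obtain Ji where Ji: "J ** Ji = mat 1" "Ji ** J = mat 1"
    using assms unfolding nondeg_sym_form_def invertible_def by blast
  have JT: "transpose J = J" using assms unfolding nondeg_sym_form_def by blast
  have TJi: "transpose Ji ** J = mat 1"
    by (metis Ji(1) JT matrix_transpose_mul transpose_mat)
  fix x assume x: "x \<in> carrier (iso_group J)"
  obtain A b where xe: "x = (A, b)" by (cases x)
  have AJ: "transpose A ** J ** A = J" using x xe by (simp add: iso_carrier)
  define B where "B = Ji ** transpose A ** J"
  have "B ** A = Ji ** (transpose A ** J ** A)" by (simp add: B_def matrix_mul_assoc)
  then have BA: "B ** A = mat 1" by (simp add: AJ Ji)
  then have AB: "A ** B = mat 1" using matrix_left_right_inverse by blast
  have TB: "transpose B = J ** A ** transpose Ji"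
    by (simp add: B_def matrix_transpose_mul JT matrix_mul_assoc)
  have "transpose B ** J ** B = J ** A ** (transpose Ji ** J) ** B"
    by (simp add: TB matrix_mul_assoc)
  also have "\<dots> = J ** (A ** B)" by (simp add: TJi matrix_mul_assoc)
  also have "\<dots> = J" by (simp add: AB)
  finally have "transpose B ** J ** B = J" .
  then have "(B, - (B *v b)) \<in> carrier (iso_group J)" by (simp add: iso_carrier)
  moreover have "(B, - (B *v b)) \<otimes>\<^bsub>iso_group J\<^esub> x = \<one>\<^bsub>iso_group J\<^esub>"
    by (simp add: iso_mult iso_one xe BA)
  ultimately show "\<exists>y \<in> carrier (iso_group J). y \<otimes>\<^bsub>iso_group J\<^esub> x = \<one>\<^bsub>iso_group J\<^esub>" by blast
next
  fix x y assume "x \<in> carrier (iso_group J)" "y \<in> carrier (iso_group J)"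
  then show "x \<otimes>\<^bsub>iso_group J\<^esub> y \<in> carrier (iso_group J)"
    by (simp add: iso_carrier iso_mult matrix_transpose_mul matrix_mul_assoc)
       (metis matrix_mul_assoc)
next
  show "\<one>\<^bsub>iso_group J\<^esub> \<in> carrier (iso_group J)"
    by (simp add: iso_carrier iso_one)
next
  fix x y z :: "'a aff"
  show "x \<otimes>\<^bsub>iso_group J\<^esub> y \<otimes>\<^bsub>iso_group J\<^esub> z = x \<otimes>\<^bsub>iso_group J\<^esub> (y \<otimes>\<^bsub>iso_group J\<^esub> z)"
    by (simp add: iso_mult matrix_mul_assoc matrix_vector_mul_assoc matrix_vector_right_distrib algebra_simps)
next
  fix x :: "'a aff"
  show "\<one>\<^bsub>iso_group J\<^esub> \<otimes>\<^bsub>iso_group J\<^esub> x = x"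
    by (simp add: iso_mult iso_one)
qed

theorem proposition6p6:
  fixes J :: "real^'n^'n" and G U :: "'n aff set" and p :: "real^'n"
  assumes "nondeg_sym_form J"
    and "algebraic_subgroup J G"
    and "acts_transitively_on (centralizer_in J G) UNIV"
    and "is_unipotent_radical J (centralizer_in J G) U"
    and "acts_transitively_on U UNIV"
  shows "algebraic_subgroup J {u \<in> U. aff_act u ` ((\<lambda>g. aff_act g p) ` G) \<subseteq> (\<lambda>g. aff_act g p) ` G}
       \<and> {u \<in> U. aff_act u ` ((\<lambda>g. aff_act g p) ` G) \<subseteq> (\<lambda>g. aff_act g p) ` G} \<subseteq> U
       \<and> acts_transitively_on {u \<in> U. aff_act u ` ((\<lambda>g. aff_act g p) ` G) \<subseteq> (\<lambda>g. aff_act g p) ` G}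
                               ((\<lambda>g. aff_act g p) ` G)
       \<and> normal {u \<in> U. aff_act u p = p}
           ((iso_group J)\<lparr>carrier := {u \<in> U. aff_act u ` ((\<lambda>g. aff_act g p) ` G) \<subseteq> (\<lambda>g. aff_act g p) ` G}\<rparr>)"
proof -
  let ?I = "iso_group J"
  define F where "F = (\<lambda>g. aff_act g p) ` G"
  define K where "K = {u \<in> U. aff_act u ` F \<subseteq> F}"
  define N where "N = {u \<in> U. aff_act u p = p}"
  have grp: "group ?I" using assms(1) by (rule iso_group_is_group)
  have sG: "subgroup G ?I" using assms(2) unfolding algebraic_subgroup_def by (elim conjE)
  have zG: "zariski_closed_in (carrier ?I) G" using assms(2) unfolding algebraic_subgroup_def by (elim conjE)
  have sU: "subgroup U ?I" using assms(4) unfolding is_unipotent_radical_def algebraic_subgroup_def by (elim conjE)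
  have zU: "zariski_closed_in (carrier ?I) U" using assms(4) unfolding is_unipotent_radical_def algebraic_subgroup_def by (elim conjE)
  have UL: "U \<subseteq> centralizer_in J G" using assms(4) unfolding is_unipotent_radical_def by (elim conjE)
  have commg: "u \<otimes>\<^bsub>?I\<^esub> g = g \<otimes>\<^bsub>?I\<^esub> u" if "u \<in> U" "g \<in> G" for u g
  proof -
    have "u \<in> centralizer_in J G" using UL that(1) by (rule subsetD)
    then show ?thesis using that(2) unfolding centralizer_in_def by simp
  qed
  have comm: "aff_act u (aff_act g x) = aff_act g (aff_act u x)" if "u \<in> U" "g \<in> G" for u g x
  proof -
    have "aff_act (u \<otimes>\<^bsub>?I\<^esub> g) x = aff_act (g \<otimes>\<^bsub>?I\<^esub> u) x" using commg[OF that] by simp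
    then show ?thesis by (simp only: aff_act_mult)
  qed
  have Gc: "g \<in> carrier ?I" if "g \<in> G" for g using subgroup.subset[OF sG] that by (rule subsetD)
  have Uc: "g \<in> carrier ?I" if "g \<in> U" for g using subgroup.subset[OF sU] that by (rule subsetD)
  have invact: "aff_act (inv\<^bsub>?I\<^esub> g) (aff_act g x) = x" "aff_act g (aff_act (inv\<^bsub>?I\<^esub> g) x) = x"
    if "g \<in> carrier ?I" for g x
  proof -
    have "aff_act (inv\<^bsub>?I\<^esub> g) (aff_act g x) = aff_act (inv\<^bsub>?I\<^esub> g \<otimes>\<^bsub>?I\<^esub> g) x"
      by (simp only: aff_act_mult)
    also have "\<dots> = x" using group.l_inv[OF grp that] by (simp add: aff_act_one)
    finally show "aff_act (inv\<^bsub>?I\<^esub> g) (aff_act g x) = x" .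
    have "aff_act g (aff_act (inv\<^bsub>?I\<^esub> g) x) = aff_act (g \<otimes>\<^bsub>?I\<^esub> inv\<^bsub>?I\<^esub> g) x"
      by (simp only: aff_act_mult)
    also have "\<dots> = x" using group.r_inv[OF grp that] by (simp add: aff_act_one)
    finally show "aff_act g (aff_act (inv\<^bsub>?I\<^esub> g) x) = x" .
  qed
  have FI: "aff_act g p \<in> F" if "g \<in> G" for g unfolding F_def using that by (rule imageI)
  have FE: "\<exists>g\<in>G. x = aff_act g p" if "x \<in> F" for x using that unfolding F_def by blast
  have pF: "p \<in> F"
  proof -
    have "aff_act \<one>\<^bsub>?I\<^esub> p \<in> F" using FI subgroup.one_closed[OF sG] by blast
    then show ?thesis by (simp only: aff_act_one)
  qed
  have KD: "u \<in> U \<and> aff_act u p \<in> F" if "u \<in> K" for u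
  proof -
    have "u \<in> U" "aff_act u ` F \<subseteq> F" using that unfolding K_def by simp_all
    then show ?thesis using pF by blast
  qed
  have KI: "u \<in> K" if a: "u \<in> U" "aff_act u p \<in> F" for u
  proof -
    obtain g0 where g0: "g0 \<in> G" "aff_act u p = aff_act g0 p" using FE[OF a(2)] by blast
    have "aff_act u y \<in> F" if y: "y \<in> F" for y
    proof -
      obtain g where g: "g \<in> G" "y = aff_act g p" using FE[OF y] by blast
      have "aff_act u (aff_act g p) = aff_act g (aff_act u p)" using comm[OF a(1) g(1)] .
      also have "\<dots> = aff_act (g \<otimes>\<^bsub>?I\<^esub> g0) p" using g0(2) by (simp only: aff_act_mult)
      finally have "aff_act u y = aff_act (g \<otimes>\<^bsub>?I\<^esub> g0) p" using g(2) by simp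
      moreover have "g \<otimes>\<^bsub>?I\<^esub> g0 \<in> G" using subgroup.m_closed[OF sG g(1) g0(1)] .
      ultimately show ?thesis using FI by simp
    qed
    then have "aff_act u ` F \<subseteq> F" by blast
    then show ?thesis unfolding K_def using a(1) by simp
  qed
  have Kalt: "K = {u \<in> U. \<exists>g\<in>G. aff_act g p = aff_act u p}"
  proof (rule Set.set_eqI, rule iffI)
    fix u assume "u \<in> K"
    then have uU: "u \<in> U" and "aff_act u p \<in> F" using KD by simp_all
    then obtain g where "g \<in> G" "aff_act u p = aff_act g p" using FE by blast
    then have "\<exists>g\<in>G. aff_act g p = aff_act u p" by metis
    then show "u \<in> {u \<in> U. \<exists>g\<in>G. aff_act g p = aff_act u p}" using uU by simp
  next
    fix u assume "u \<in> {u \<in> U. \<exists>g\<in>G. aff_act g p = aff_act u p}"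
    then obtain g where "u \<in> U" "g \<in> G" "aff_act g p = aff_act u p" by auto
    then show "u \<in> K" using KI FI by metis
  qed
  have invU: "aff_act (inv\<^bsub>?I\<^esub> u) p = aff_act (inv\<^bsub>?I\<^esub> g) p"
    if "u \<in> U" "g \<in> G" "aff_act u p = aff_act g p" for u g
  proof -
    have iu: "inv\<^bsub>?I\<^esub> u \<in> U" using subgroup.m_inv_closed[OF sU that(1)] .
    have "aff_act (inv\<^bsub>?I\<^esub> g) p = aff_act (inv\<^bsub>?I\<^esub> g) (aff_act (inv\<^bsub>?I\<^esub> u) (aff_act u p))"
      using invact(1)[OF Uc[OF that(1)]] by simp
    also have "\<dots> = aff_act (inv\<^bsub>?I\<^esub> g) (aff_act (inv\<^bsub>?I\<^esub> u) (aff_act g p))" using that(3) by simp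
    also have "\<dots> = aff_act (inv\<^bsub>?I\<^esub> g) (aff_act g (aff_act (inv\<^bsub>?I\<^esub> u) p))"
      using comm[OF iu that(2)] by simp
    also have "\<dots> = aff_act (inv\<^bsub>?I\<^esub> u) p" using invact(1)[OF Gc[OF that(2)]] by simp
    finally show ?thesis by simp
  qed
  have sK: "subgroup K ?I"
  proof (rule group.subgroupI[OF grp])
    show "K \<subseteq> carrier ?I" using Uc KD by blast
    have "aff_act \<one>\<^bsub>?I\<^esub> p \<in> F" using pF by (simp only: aff_act_one)
    then have "\<one>\<^bsub>?I\<^esub> \<in> K" using KI subgroup.one_closed[OF sU] by blast
    then show "K \<noteq> {}" by blast
  next
    fix a assume a: "a \<in> K"
    then have aU: "a \<in> U" and "aff_act a p \<in> F" using KD by simp_all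
    then obtain g where g: "g \<in> G" "aff_act a p = aff_act g p" using FE by blast
    have "aff_act (inv\<^bsub>?I\<^esub> a) p = aff_act (inv\<^bsub>?I\<^esub> g) p" using invU[OF aU g] .
    also have "\<dots> \<in> F" using FI subgroup.m_inv_closed[OF sG g(1)] by blast
    finally show "inv\<^bsub>?I\<^esub> a \<in> K" using KI subgroup.m_inv_closed[OF sU aU] by blast
  next
    fix a b assume ab: "a \<in> K" "b \<in> K"
    have aU: "a \<in> U" and bU: "b \<in> U" and bF: "aff_act b p \<in> F" using KD ab by simp_all
    have "aff_act a ` F \<subseteq> F" using ab(1) unfolding K_def by simp
    then have "aff_act a (aff_act b p) \<in> F" using bF by blast
    then have "aff_act (a \<otimes>\<^bsub>?I\<^esub> b) p \<in> F" by (simp only: aff_act_mult)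
    then show "a \<otimes>\<^bsub>?I\<^esub> b \<in> K" using KI subgroup.m_closed[OF sU aU bU] by blast
  qed
  have trK: "acts_transitively_on K F"
    unfolding acts_transitively_on_def
  proof (intro ballI)
    fix x y assume "x \<in> F" "y \<in> F"
    then obtain g1 g2 where g: "g1 \<in> G" "g2 \<in> G" "x = aff_act g1 p" "y = aff_act g2 p"
      using FE by metis
    obtain u where u: "u \<in> U" "aff_act u x = y" using assms(5) unfolding acts_transitively_on_def by blast
    have "aff_act g1 (aff_act u p) = aff_act u (aff_act g1 p)" using comm[OF u(1) g(1)] by simp
    then have e1: "aff_act g1 (aff_act u p) = aff_act g2 p" using u(2) g(3,4) by simp
    have "aff_act u p = aff_act (inv\<^bsub>?I\<^esub> g1) (aff_act g1 (aff_act u p))"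
      using invact(1)[OF Gc[OF g(1)]] by simp
    also have "\<dots> = aff_act (inv\<^bsub>?I\<^esub> g1 \<otimes>\<^bsub>?I\<^esub> g2) p" using e1 by (simp only: aff_act_mult)
    finally have "aff_act u p = aff_act (inv\<^bsub>?I\<^esub> g1 \<otimes>\<^bsub>?I\<^esub> g2) p" .
    moreover have "inv\<^bsub>?I\<^esub> g1 \<otimes>\<^bsub>?I\<^esub> g2 \<in> G"
      using subgroup.m_closed[OF sG subgroup.m_inv_closed[OF sG g(1)] g(2)] .
    ultimately have "aff_act u p \<in> F" using FI by simp
    then have "u \<in> K" using KI u(1) by blast
    then show "\<exists>h\<in>K. aff_act h x = y" using u(2) by blast
  qed
  have NK: "N \<subseteq> K"
  proof
    fix u assume "u \<in> N"
    then have "u \<in> U" "aff_act u p = p" unfolding N_def by simp_all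
    then show "u \<in> K" using KI pF by simp
  qed
  have sN: "subgroup N ?I"
  proof (rule group.subgroupI[OF grp])
    show "N \<subseteq> carrier ?I" using Uc unfolding N_def by blast
    have "aff_act \<one>\<^bsub>?I\<^esub> p = p" by (simp only: aff_act_one)
    then have "\<one>\<^bsub>?I\<^esub> \<in> N" unfolding N_def using subgroup.one_closed[OF sU] by simp
    then show "N \<noteq> {}" by blast
  next
    fix a assume a: "a \<in> N"
    then have aU: "a \<in> U" and ap: "aff_act a p = p" unfolding N_def by simp_all
    have "aff_act (inv\<^bsub>?I\<^esub> a) p = p" using invact(1)[OF Uc[OF aU], of p] ap by simp
    then show "inv\<^bsub>?I\<^esub> a \<in> N" unfolding N_def
      using subgroup.m_inv_closed[OF sU aU] by simp
  next
    fix a b assume "a \<in> N" "b \<in> N"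
    then have aU: "a \<in> U" and ap: "aff_act a p = p" and bU: "b \<in> U" and bp: "aff_act b p = p"
      unfolding N_def by simp_all
    have "aff_act (a \<otimes>\<^bsub>?I\<^esub> b) p = p" using ap bp by (simp only: aff_act_mult)
    then show "a \<otimes>\<^bsub>?I\<^esub> b \<in> N" unfolding N_def using subgroup.m_closed[OF sU aU bU] by simp
  qed
  have nN: "N \<lhd> ?I\<lparr>carrier := K\<rparr>"
  proof -
    have Kgrp: "group (?I\<lparr>carrier := K\<rparr>)" using subgroup.subgroup_is_group[OF sK grp] .
    have sNK: "subgroup N (?I\<lparr>carrier := K\<rparr>)" using group.subgroup_incl[OF grp sN sK NK] .
    have conj: "x \<otimes>\<^bsub>?I\<lparr>carrier := K\<rparr>\<^esub> h \<otimes>\<^bsub>?I\<lparr>carrier := K\<rparr>\<^esub> inv\<^bsub>?I\<lparr>carrier := K\<rparr>\<^esub> x \<in> N"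
      if x: "x \<in> carrier (?I\<lparr>carrier := K\<rparr>)" and h: "h \<in> N" for x h
    proof -
      have xK: "x \<in> K" using x by simp
      have "inv\<^bsub>?I\<lparr>carrier := K\<rparr>\<^esub> x = inv\<^bsub>?I\<^esub> x" using group.m_inv_consistent[OF grp sK xK] .
      then have eq: "x \<otimes>\<^bsub>?I\<lparr>carrier := K\<rparr>\<^esub> h \<otimes>\<^bsub>?I\<lparr>carrier := K\<rparr>\<^esub> inv\<^bsub>?I\<lparr>carrier := K\<rparr>\<^esub> x
          = x \<otimes>\<^bsub>?I\<^esub> h \<otimes>\<^bsub>?I\<^esub> inv\<^bsub>?I\<^esub> x" by simp
      have xU: "x \<in> U" and "aff_act x p \<in> F" using KD[OF xK] by simp_all
      then obtain g where g: "g \<in> G" "aff_act x p = aff_act g p" using FE by blast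
      have hU: "h \<in> U" and hp: "aff_act h p = p" using h unfolding N_def by simp_all
      have gi: "inv\<^bsub>?I\<^esub> g \<in> G" using subgroup.m_inv_closed[OF sG g(1)] .
      have "aff_act (x \<otimes>\<^bsub>?I\<^esub> h \<otimes>\<^bsub>?I\<^esub> inv\<^bsub>?I\<^esub> x) p
            = aff_act x (aff_act h (aff_act (inv\<^bsub>?I\<^esub> x) p))"
        by (simp only: aff_act_mult)
      also have "\<dots> = aff_act x (aff_act h (aff_act (inv\<^bsub>?I\<^esub> g) p))" using invU[OF xU g] by simp
      also have "\<dots> = aff_act x (aff_act (inv\<^bsub>?I\<^esub> g) p)" using comm[OF hU gi] hp by simp
      also have "\<dots> = aff_act (inv\<^bsub>?I\<^esub> g) (aff_act g p)" using comm[OF xU gi] g(2) by simp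
      also have "\<dots> = p" using invact(1)[OF Gc[OF g(1)]] .
      finally have "aff_act (x \<otimes>\<^bsub>?I\<^esub> h \<otimes>\<^bsub>?I\<^esub> inv\<^bsub>?I\<^esub> x) p = p" .
      moreover have "x \<otimes>\<^bsub>?I\<^esub> h \<otimes>\<^bsub>?I\<^esub> inv\<^bsub>?I\<^esub> x \<in> U"
        using subgroup.m_closed[OF sU subgroup.m_closed[OF sU xU hU] subgroup.m_inv_closed[OF sU xU]] .
      ultimately show ?thesis unfolding eq N_def by simp
    qed
    show ?thesis using group.normal_inv_iff[OF Kgrp] sNK conj by blast
  qed
  have zK: "zariski_closed_in (carrier ?I) K"
    unfolding Kalt by (rule zar[OF grp sG zG zU sU commg assms(5)])
  have eK: "{u \<in> U. aff_act u ` ((\<lambda>g. aff_act g p) ` G) \<subseteq> (\<lambda>g. aff_act g p) ` G} = K"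
    by (simp only: K_def F_def)
  have eF: "(\<lambda>g. aff_act g p) ` G = F" by (simp only: F_def)
  have KU: "K \<subseteq> U" using KD by blast
  have "algebraic_subgroup J K" unfolding algebraic_subgroup_def using sK zK by (rule conjI)
  then show ?thesis
    unfolding eF K_def[symmetric] N_def[symmetric] using KU trK nN by (intro conjI)
qed
end
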